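(* Let $w\ge 2$, $h\ge 3$ and $G=P_w(U)\sqcap C_h$ with $U=\{i,j\}$ for distinct $i,j\in\{1,\dots,w\}$. Then $Z(G)\le h$.
   Context: All graphs are finite, simple and undirected. Zero forcing: given a graph $G$ and a set $S\subseteq V(G)$ of initially filled vertices, the color change rule says that if a filled vertex $v$ has exactly one unfilled neighbor $u$, then $v$ forces $u$ to become filled. $S$ is a zero forcing set if repeatedly applying this rule eventually fills every vertex of $G$. The zero forcing number $Z(G)$ is the minimum cardinality of a zero forcing set of $G$. The path $P_n$ has vertex set $\{1,\dots,n\}$ and edges $\{k,k+1\}$ for $1\le k\le n-1$; the cycle $C_n$ ($n\ge3$) has vertex set $\{1,\dots,n\}$ and edges $\{k,k+1\}$ for $1\le k\le n-1$ together with $\{n,1\}$. Generalized hierarchical product: for graphs $W,H$ and $U\subseteq V(W)$ (the root set), $W(U)\sqcap H$ is the graph with vertex set $V(W)\times V(H)$ in which $(x_1,y_1)$ and $(x_2,y_2)$ are adjacent iff either ($x_1=x_2\in U$ and $y_1y_2\in E(H)$) or ($y_1=y_2$ and $x_1x_2\in E(W)$). *)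

theory Defs
  imports Main
begin

text \<open>A finite simple graph is represented by a vertex set V and an adjacency
  relation E (assumed symmetric, irreflexive, within V for the concrete graphs below).\<close>

definition path_adj :: "nat \<Rightarrow> nat \<Rightarrow> nat \<Rightarrow> bool" where
  "path_adj n a b \<longleftrightarrow> a \<in> {1..n} \<and> b \<in> {1..n} \<and> (b = a + 1 \<or> a = b + 1)"

definition cycle_adj :: "nat \<Rightarrow> nat \<Rightarrow> nat \<Rightarrow> bool" where
  "cycle_adj n a b \<longleftrightarrow> a \<in> {1..n} \<and> b \<in> {1..n} \<and>
     (b = a + 1 \<or> a = b + 1 \<or> (a = n \<and> b = 1) \<or> (a = 1 \<and> b = n))"

definition hprod_adj ::
  "('a \<Rightarrow> 'a \<Rightarrow> bool) \<Rightarrow> 'a set \<Rightarrow> ('b \<Rightarrow> 'b \<Rightarrow> bool) \<Rightarrow> 'a \<times> 'b \<Rightarrow> 'a \<times> 'b \<Rightarrow> bool" where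
  "hprod_adj EW U EH p q \<longleftrightarrow>
     (fst p = fst q \<and> fst p \<in> U \<and> EH (snd p) (snd q)) \<or>
     (snd p = snd q \<and> EW (fst p) (fst q))"

inductive filled :: "'v set \<Rightarrow> ('v \<Rightarrow> 'v \<Rightarrow> bool) \<Rightarrow> 'v set \<Rightarrow> 'v \<Rightarrow> bool"
  for V E S where
  init: "x \<in> S \<Longrightarrow> filled V E S x"
| force: "\<lbrakk> v \<in> V; u \<in> V; filled V E S v; E v u;
           \<And>w. \<lbrakk> w \<in> V; E v w; w \<noteq> u \<rbrakk> \<Longrightarrow> filled V E S w \<rbrakk>
         \<Longrightarrow> filled V E S u"

definition zero_forcing_set :: "'v set \<Rightarrow> ('v \<Rightarrow> 'v \<Rightarrow> bool) \<Rightarrow> 'v set \<Rightarrow> bool" where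
  "zero_forcing_set V E S \<longleftrightarrow> S \<subseteq> V \<and> (\<forall>x\<in>V. filled V E S x)"

definition zero_forcing_number :: "'v set \<Rightarrow> ('v \<Rightarrow> 'v \<Rightarrow> bool) \<Rightarrow> nat" where
  "zero_forcing_number V E = Min (card ` {S. zero_forcing_set V E S})"

end

theory Submission
  imports Defs
begin

theorem mainTheorem9:
  fixes w h i j :: nat
  assumes "w \<ge> 2" and "h \<ge> 3"
    and "i \<in> {1..w}" and "j \<in> {1..w}" and "i \<noteq> j"
  shows "zero_forcing_number ({1..w} \<times> {1..h})
           (hprod_adj (path_adj w) {i, j} (cycle_adj h)) \<le> h"
proof -
  define V where "V = {1..w} \<times> {1..h}"
  define E where "E = hprod_adj (path_adj w) {i, j} (cycle_adj h)"
  define S where "S = {1::nat} \<times> {1..h}"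
  have P: "n \<le> w \<Longrightarrow> \<forall>x\<in>{1..n}. \<forall>y\<in>{1..h}. filled V E S (x,y)" for n
  proof (induction n)
    case 0 then show ?case by simp
  next
    case (Suc n)
    hence IH: "\<forall>x\<in>{1..n}. \<forall>y\<in>{1..h}. filled V E S (x,y)" by simp
    show ?case
    proof (intro ballI)
      fix x y assume x: "x \<in> {1..Suc n}" and y: "y \<in> {1..h}"
      show "filled V E S (x,y)"
      proof (cases "x \<le> n")
        case True then show ?thesis using IH x y by auto
      next
        case False
        hence xe: "x = Suc n" using x by auto
        show ?thesis
        proof (cases "n = 0")
          case True then show ?thesis using xe y by (auto simp: S_def intro: filled.init)
        next
          case False
          show ?thesis unfolding xe
          proof (rule filled.force[where v="(n,y)"])
            show "(n, y) \<in> V" using False Suc.prems y by (auto simp: V_def)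
            show "(Suc n, y) \<in> V" using Suc.prems y by (auto simp: V_def)
            show "filled V E S (n, y)" using IH False y by auto
            show "E (n, y) (Suc n, y)" using False Suc.prems y
              by (auto simp: E_def hprod_adj_def path_adj_def)
            fix q assume q: "q \<in> V" "E (n, y) q" "q \<noteq> (Suc n, y)"
            obtain a b where qab: "q = (a,b)" by (cases q)
            have "a \<in> {1..n}"
              using q False unfolding qab by (auto simp: V_def E_def hprod_adj_def path_adj_def)
            moreover have "b \<in> {1..h}" using q unfolding qab by (auto simp: V_def)
            ultimately show "filled V E S q" using IH qab by auto
          qed
        qed
      qed
    qed
  qed
  have zfs: "zero_forcing_set V E S"
    unfolding zero_forcing_set_def
  proof
    show "S \<subseteq> V" using assms by (auto simp: S_def V_def)
    show "\<forall>x\<in>V. filled V E S x" using P[of w] by (auto simp: V_def)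
  qed
  have fin: "finite (card ` {S. zero_forcing_set V E S})"
  proof -
    have "{S. zero_forcing_set V E S} \<subseteq> Pow V" by (auto simp: zero_forcing_set_def)
    moreover have "finite (Pow V)" by (simp add: V_def)
    ultimately show ?thesis by (meson finite_subset finite_imageI)
  qed
  have "zero_forcing_number V E \<le> card S"
    unfolding zero_forcing_number_def using fin zfs by (intro Min_le) auto
  moreover have "card S = h" by (simp add: S_def card_cartesian_product)
  ultimately show ?thesis by (simp add: V_def E_def)
qed

end
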